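(* Let $E$ and $H$ be finite directed graphs and let $\xi^{0},\xi^{1}:H\to E$ be an embedding pair, with associated self-similar groupoid action $(G_{\xi},E)$. Then, on $E^{-\infty}$, the equivalence relation $\sim_{\xi}$ is equal to the asymptotic equivalence relation $\sim_{ae}$ of $(G_{\xi},E)$. Consequently $(\sigma_{\xi},\mathcal{J}_{\xi})=(\tilde{\sigma},\mathcal{J}_{G_{\xi},E})$.
   Context: A directed graph $E=(E^0,E^1,r,s)$ has vertices $E^0$, edges $E^1$, range and source maps $r,s:E^1\to E^0$. A finite path of length $n$ is $\mu=\mu_1\cdots\mu_n$ with $s(\mu_i)=r(\mu_{i+1})$; vertices are paths of length $0$; $E^*$ is the set of finite paths, $r(\mu)=r(\mu_1)$, $s(\mu)=s(\mu_n)$, and $vE^*$ denotes paths with range $v$. $E^{-\infty}$ is the set of left-infinite paths $\mu=\cdots\mu_{-2}\mu_{-1}$ (edges with $s(\mu_i)=r(\mu_{i+1})$), with the product topology, and the shift $\sigma:E^{-\infty}\to E^{-\infty}$ is $\sigma(\cdots\mu_{-3}\mu_{-2}\mu_{-1})=\cdots\mu_{-3}\mu_{-2}$. An embedding pair consists of two injective graph homomorphisms $\xi^0,\xi^1:H\to E$ with $\xi^0|_{H^0}=\xi^1|_{H^0}$ and $\xi^0(H^1)\cap\xi^1(H^1)=\emptyset$. Put $H^0_\xi=\xi^0(H^0)$ and $H^1_\xi=\xi^0(H^1)\cup\xi^1(H^1)$. The groupoid $\tilde G_\xi=\mathbb{Z}\times E^0$ is the group bundle where $(m,v),(n,w)$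 are composable iff $v=w$, with $(m,v)(n,v)=(m+n,v)$, and domain = codomain = $v$. For $(m,v)$ and $e\in vE^1$ define: if $e\notin H^1_\xi$, $(m,v)\cdot e=e$ and $(m,v)|_e=(0,s(e))$; if $e=\xi^i(h)$ with $h\in H^1$, $i\in\{0,1\}$, write $m+i=2n+j$ with $j\in\{0,1\}$, $n\in\mathbb{Z}$, and set $(m,v)\cdot e=\xi^j(h)$, $(m,v)|_e=(n,s(e))$. This extends recursively to an action on finite paths by $g\cdot(e\nu)=(g\cdot e)(g|_e\cdot\nu)$ with $g|_{e\nu}=(g|_e)|_\nu$. $G_\xi$ is the quotient of $\tilde G_\xi$ by the elements acting trivially on $E^*$; it acts faithfully and self-similarly on $E^*$ (restrictions descend), giving the self-similar groupoid action $(G_\xi,E)$. Asymptotic equivalence: for $\mu,\nu\in E^{-\infty}$, $\mu\sim_{ae}\nu$ iff there are a finite set $F\subseteq G_\xi$ and $(g_n)_{n<0}\subseteq F$ with $d(g_n)=r(\mu_n)$ and $g_n\cdot\mu_n\cdots\mu_{-1}=\nu_n\cdots\nu_{-1}$ for all $n<0$. The limit space $\mathcal{J}_{G_\xi,E}=E^{-\infty}/\sim_{ae}$ (quotient topology) with $\tilde\sigma$ induced by $\sigma$. The relation $\sim_\xi$: $\mu\sim_\xi\nu$ iff $\mu=\nu$, or there are $n<0$, $i\in\{0,1\}$ and $(y_k)_{k\le n}\subseteq H^1$ with $\mu_k=\xi^i(y_k)$ and $\nu_k=\xi^{1-i}(y_k)$ for all $k\le n$, and one of: (1) $n=-1$;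 (2) $n<-1$, $\mu_j=\nu_j$ for all $j>n+1$, and there is $y_{n+1}\in H^1$ with $\mu_{n+1}=\xi^{1-i}(y_{n+1})$, $\nu_{n+1}=\xi^i(y_{n+1})$; (3) $n<-1$, $\mu_j=\nu_j$ for all $j\ge n+1$, and $\mu_{n+1}=\nu_{n+1}\notin H^1_\xi$. $\mathcal{J}_\xi=E^{-\infty}/\sim_\xi$ with $\sigma_\xi$ induced by $\sigma$. *)

theory Defs
  imports Main
begin

definition dgraph :: "'v set \<Rightarrow> 'e set \<Rightarrow> ('e \<Rightarrow> 'v) \<Rightarrow> ('e \<Rightarrow> 'v) \<Rightarrow> bool" where
  "dgraph V Ed r s \<longleftrightarrow> (\<forall>e\<in>Ed. r e \<in> V \<and> s e \<in> V)"

definition finite_dgraph :: "'v set \<Rightarrow> 'e set \<Rightarrow> ('e \<Rightarrow> 'v) \<Rightarrow> ('e \<Rightarrow> 'v) \<Rightarrow> bool" where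
  "finite_dgraph V Ed r s \<longleftrightarrow> dgraph V Ed r s \<and> finite V \<and> finite Ed"

definition inj_graph_hom ::
  "'w set \<Rightarrow> 'f set \<Rightarrow> ('f \<Rightarrow> 'w) \<Rightarrow> ('f \<Rightarrow> 'w) \<Rightarrow>
   'v set \<Rightarrow> 'e set \<Rightarrow> ('e \<Rightarrow> 'v) \<Rightarrow> ('e \<Rightarrow> 'v) \<Rightarrow>
   ('w \<Rightarrow> 'v) \<Rightarrow> ('f \<Rightarrow> 'e) \<Rightarrow> bool" where
  "inj_graph_hom H0 H1 rH sH E0 E1 r s phi0 phi1 \<longleftrightarrow>
     phi0 ` H0 \<subseteq> E0 \<and> phi1 ` H1 \<subseteq> E1 \<and>
     (\<forall>h\<in>H1. r (phi1 h) = phi0 (rH h) \<and> s (phi1 h) = phi0 (sH h)) \<and>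
     inj_on phi0 H0 \<and> inj_on phi1 H1"

definition embedding_pair ::
  "'w set \<Rightarrow> 'f set \<Rightarrow> ('f \<Rightarrow> 'w) \<Rightarrow> ('f \<Rightarrow> 'w) \<Rightarrow>
   'v set \<Rightarrow> 'e set \<Rightarrow> ('e \<Rightarrow> 'v) \<Rightarrow> ('e \<Rightarrow> 'v) \<Rightarrow>
   ('w \<Rightarrow> 'v) \<Rightarrow> ('f \<Rightarrow> 'e) \<Rightarrow> ('w \<Rightarrow> 'v) \<Rightarrow> ('f \<Rightarrow> 'e) \<Rightarrow> bool" where
  "embedding_pair H0 H1 rH sH E0 E1 r s x0v x0e x1v x1e \<longleftrightarrow>
     inj_graph_hom H0 H1 rH sH E0 E1 r s x0v x0e \<and>
     inj_graph_hom H0 H1 rH sH E0 E1 r s x1v x1e \<and>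
     (\<forall>w\<in>H0. x0v w = x1v w) \<and>
     x0e ` H1 \<inter> x1e ` H1 = {}"

definition xi_sel :: "nat \<Rightarrow> ('f \<Rightarrow> 'e) \<Rightarrow> ('f \<Rightarrow> 'e) \<Rightarrow> 'f \<Rightarrow> 'e" where
  "xi_sel i x0e x1e = (if i = 0 then x0e else x1e)"

definition H1xi :: "'f set \<Rightarrow> ('f \<Rightarrow> 'e) \<Rightarrow> ('f \<Rightarrow> 'e) \<Rightarrow> 'e set" where
  "H1xi H1 x0e x1e = x0e ` H1 \<union> x1e ` H1"

(* One step of the action of (m, r e) in Z x E^0 on an edge e:
   returns (m,v).e together with the restriction (m,v)|_e. *)
definition edge_act ::
  "'f set \<Rightarrow> ('f \<Rightarrow> 'e) \<Rightarrow> ('f \<Rightarrow> 'e) \<Rightarrow> ('e \<Rightarrow> 'v) \<Rightarrow> int \<Rightarrow> 'e \<Rightarrow> 'e \<times> (int \<times> 'v)" where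
  "edge_act H1 x0e x1e s m e =
    (if e \<in> H1xi H1 x0e x1e then
       (let ih = (THE ih. fst ih \<in> {0,1} \<and> snd ih \<in> H1 \<and> e = xi_sel (fst ih) x0e x1e (snd ih));
            i = fst ih; h = snd ih
        in (xi_sel (nat ((m + int i) mod 2)) x0e x1e h, ((m + int i) div 2, s e)))
     else (e, (0, s e)))"

fun path_act ::
  "'f set \<Rightarrow> ('f \<Rightarrow> 'e) \<Rightarrow> ('f \<Rightarrow> 'e) \<Rightarrow> ('e \<Rightarrow> 'v) \<Rightarrow> int \<times> 'v \<Rightarrow> 'e list \<Rightarrow> 'e list" where
  "path_act H1 x0e x1e s g [] = []"
| "path_act H1 x0e x1e s g (e # p) =
     (let (e', g') = edge_act H1 x0e x1e s (fst g) e in e' # path_act H1 x0e x1e s g' p)"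

definition fpath :: "'e set \<Rightarrow> ('e \<Rightarrow> 'v) \<Rightarrow> ('e \<Rightarrow> 'v) \<Rightarrow> 'e list \<Rightarrow> bool" where
  "fpath E1 r s p \<longleftrightarrow> set p \<subseteq> E1 \<and> (\<forall>i. Suc i < length p \<longrightarrow> s (p ! i) = r (p ! Suc i))"

(* Elements of the group bundle Z x E^0 acting trivially on E^*
   (vertex paths are always fixed, so only paths of positive length matter). *)
definition triv_elems ::
  "'v set \<Rightarrow> 'e set \<Rightarrow> ('e \<Rightarrow> 'v) \<Rightarrow> ('e \<Rightarrow> 'v) \<Rightarrow> 'f set \<Rightarrow> ('f \<Rightarrow> 'e) \<Rightarrow> ('f \<Rightarrow> 'e) \<Rightarrow> (int \<times> 'v) set" where
  "triv_elems E0 E1 r s H1 x0e x1e =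
     {(m, v). v \<in> E0 \<and> (\<forall>p. fpath E1 r s p \<and> p \<noteq> [] \<and> r (hd p) = v \<longrightarrow> path_act H1 x0e x1e s (m, v) p = p)}"

(* The class of g in the quotient groupoid G_xi (coset of the trivially acting subgroupoid) *)
definition Gxi_class ::
  "'v set \<Rightarrow> 'e set \<Rightarrow> ('e \<Rightarrow> 'v) \<Rightarrow> ('e \<Rightarrow> 'v) \<Rightarrow> 'f set \<Rightarrow> ('f \<Rightarrow> 'e) \<Rightarrow> ('f \<Rightarrow> 'e) \<Rightarrow> int \<times> 'v \<Rightarrow> (int \<times> 'v) set" where
  "Gxi_class E0 E1 r s H1 x0e x1e g =
     {(fst g + k, snd g) | k. (k, snd g) \<in> triv_elems E0 E1 r s H1 x0e x1e}"

definition Gxi ::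
  "'v set \<Rightarrow> 'e set \<Rightarrow> ('e \<Rightarrow> 'v) \<Rightarrow> ('e \<Rightarrow> 'v) \<Rightarrow> 'f set \<Rightarrow> ('f \<Rightarrow> 'e) \<Rightarrow> ('f \<Rightarrow> 'e) \<Rightarrow> (int \<times> 'v) set set" where
  "Gxi E0 E1 r s H1 x0e x1e = Gxi_class E0 E1 r s H1 x0e x1e ` (UNIV \<times> E0)"

definition Gxi_dom :: "(int \<times> 'v) set \<Rightarrow> 'v" where
  "Gxi_dom c = snd (SOME g. g \<in> c)"

definition Gxi_act ::
  "'f set \<Rightarrow> ('f \<Rightarrow> 'e) \<Rightarrow> ('f \<Rightarrow> 'e) \<Rightarrow> ('e \<Rightarrow> 'v) \<Rightarrow> (int \<times> 'v) set \<Rightarrow> 'e list \<Rightarrow> 'e list" where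
  "Gxi_act H1 x0e x1e s c p = path_act H1 x0e x1e s (SOME g. g \<in> c) p"

(* Left-infinite paths ... mu_{-2} mu_{-1}, indexed by negative integers;
   values at nonnegative indices are fixed to undefined so that equality of
   functions is equality of paths. *)
definition Eneg :: "'e set \<Rightarrow> ('e \<Rightarrow> 'v) \<Rightarrow> ('e \<Rightarrow> 'v) \<Rightarrow> (int \<Rightarrow> 'e) set" where
  "Eneg E1 r s = {mu. (\<forall>k<0. mu k \<in> E1) \<and> (\<forall>k< -1. s (mu k) = r (mu (k + 1))) \<and> (\<forall>k\<ge>0. mu k = undefined)}"

definition ae_rel ::
  "'v set \<Rightarrow> 'e set \<Rightarrow> ('e \<Rightarrow> 'v) \<Rightarrow> ('e \<Rightarrow> 'v) \<Rightarrow> 'f set \<Rightarrow> ('f \<Rightarrow> 'e) \<Rightarrow> ('f \<Rightarrow> 'e) \<Rightarrow> ((int \<Rightarrow> 'e) \<times> (int \<Rightarrow> 'e)) set" where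
  "ae_rel E0 E1 r s H1 x0e x1e =
     {(mu, nu). mu \<in> Eneg E1 r s \<and> nu \<in> Eneg E1 r s \<and>
        (\<exists>F g. F \<subseteq> Gxi E0 E1 r s H1 x0e x1e \<and> finite F \<and>
           (\<forall>n<0. g n \<in> F \<and> Gxi_dom (g n) = r (mu n) \<and>
              Gxi_act H1 x0e x1e s (g n) (map mu [n..-1]) = map nu [n..-1]))}"

definition xi_rel ::
  "'e set \<Rightarrow> ('e \<Rightarrow> 'v) \<Rightarrow> ('e \<Rightarrow> 'v) \<Rightarrow> 'f set \<Rightarrow> ('f \<Rightarrow> 'e) \<Rightarrow> ('f \<Rightarrow> 'e) \<Rightarrow> ((int \<Rightarrow> 'e) \<times> (int \<Rightarrow> 'e)) set" where
  "xi_rel E1 r s H1 x0e x1e =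
     {(mu, nu). mu \<in> Eneg E1 r s \<and> nu \<in> Eneg E1 r s \<and>
        (mu = nu \<or>
         (\<exists>n::int. \<exists>i::nat. \<exists>y::int \<Rightarrow> 'f. n < 0 \<and> i \<in> {0,1} \<and>
            (\<forall>k\<le>n. y k \<in> H1 \<and> mu k = xi_sel i x0e x1e (y k) \<and> nu k = xi_sel (1 - i) x0e x1e (y k)) \<and>
            (n = -1 \<or>
             (n < -1 \<and> (\<forall>j. n + 1 < j \<and> j < 0 \<longrightarrow> mu j = nu j) \<and>
                (\<exists>y'\<in>H1. mu (n+1) = xi_sel (1 - i) x0e x1e y' \<and> nu (n+1) = xi_sel i x0e x1e y')) \<or>
             (n < -1 \<and> (\<forall>j. n + 1 \<le> j \<and> j < 0 \<longrightarrow> mu j = nu j) \<and>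
                mu (n+1) \<notin> H1xi H1 x0e x1e))))}"

end

theory Submission imports Defs begin

locale EP =
  fixes H1 :: "'f set" and x0e x1e :: "'f \<Rightarrow> 'e" and s :: "'e \<Rightarrow> 'v"
  assumes inj0: "inj_on x0e H1" and inj1: "inj_on x1e H1" and disj: "x0e ` H1 \<inter> x1e ` H1 = {}"
begin

abbreviation X where "X i \<equiv> xi_sel i x0e x1e"
abbreviation HX where "HX \<equiv> H1xi H1 x0e x1e"

lemma dec:
  assumes "i \<in> {0,1}" "h \<in> H1" "i' \<in> {0,1}" "h' \<in> H1" "X i h = X i' h'"
  shows "i = i' \<and> h = h'"
  using assms inj0 inj1 disj unfolding xi_sel_def
  by (auto split: if_splits dest: inj_onD)

lemma X_in: "h \<in> H1 \<Longrightarrow> X i h \<in> HX"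
  by (auto simp: xi_sel_def H1xi_def)

lemma HX_cases: "e \<in> HX \<Longrightarrow> \<exists>i\<in>{0,1}. \<exists>h\<in>H1. e = X i h"
  unfolding H1xi_def xi_sel_def
  by (auto intro: bexI[of _ 0] bexI[of _ 1])

lemma the_dec:
  assumes "i \<in> {0,1}" "h \<in> H1"
  shows "(THE ih. fst ih \<in> {0,1} \<and> snd ih \<in> H1 \<and> X i h = X (fst ih) (snd ih)) = (i,h)"
proof (rule the_equality)
  fix ih :: "nat \<times> 'f" assume "fst ih \<in> {0,1} \<and> snd ih \<in> H1 \<and> X i h = X (fst ih) (snd ih)"
  then show "ih = (i,h)" using dec[OF assms] by (cases ih) auto
qed (use assms in auto)

lemma edge_act_H:
  assumes "i \<in> {0,1}" "h \<in> H1"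
  shows "edge_act H1 x0e x1e s m (X i h) = (X (nat ((m + int i) mod 2)) h, ((m + int i) div 2, s (X i h)))"
  using the_dec[OF assms] X_in[OF assms(2)] unfolding edge_act_def by (simp add: Let_def)

lemma edge_act_N: "e \<notin> HX \<Longrightarrow> edge_act H1 x0e x1e s m e = (e, (0, s e))"
  unfolding edge_act_def by simp

definition pa :: "int \<Rightarrow> 'e list \<Rightarrow> 'e list" where
  "pa m p = path_act H1 x0e x1e s (m, undefined) p"

lemma path_act_vert: "path_act H1 x0e x1e s (m, v) p = path_act H1 x0e x1e s (m, w) p"
  by (induction p arbitrary: m v w) (auto split: prod.splits)

lemma path_act_pa: "path_act H1 x0e x1e s g p = pa (fst g) p"
  unfolding pa_def by (cases g) (metis fst_conv path_act_vert)

lemma pa_Nil[simp]: "pa m [] = []"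
  by (simp add: pa_def)

lemma pa_H[simp]:
  assumes "i \<in> {0,1}" "h \<in> H1"
  shows "pa m (X i h # p) = X (nat ((m + int i) mod 2)) h # pa ((m + int i) div 2) p"
  using edge_act_H[OF assms, of m] path_act_vert[of "(m + int i) div 2" "s (X i h)" p undefined] by (simp add: pa_def)

lemma pa_N[simp]: "e \<notin> HX \<Longrightarrow> pa m (e # p) = e # pa 0 p"
  using edge_act_N[of e m] path_act_vert[of 0 "s e" p undefined] by (simp add: pa_def)

lemma pa_cases:
  obtains (H) i h where "i \<in> {0,1}" "h \<in> H1" "e = X i h"
    | (N) "e \<notin> HX"
  using HX_cases by blast

lemma pa_0[simp]: "pa 0 p = p"
proof (induction p)
  case (Cons e p)
  then show ?case
  proof (cases e rule: pa_cases)
    case (H i h) then show ?thesis using Cons by auto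
  qed simp
qed simp

lemma pa_length[simp]: "length (pa m p) = length p"
proof (induction p arbitrary: m)
  case (Cons e p)
  then show ?case by (cases e rule: pa_cases) auto
qed simp

lemma pa_add: "pa (m + k) p = pa m (pa k p)"
proof (induction p arbitrary: m k)
  case (Cons e p)
  then show ?case
  proof (cases e rule: pa_cases)
    case (H i h)
    define j where "j = nat ((k + int i) mod 2)"
    have j: "j \<in> {0,1}" unfolding j_def by auto
    have "int j = (k + int i) mod 2" unfolding j_def by simp
    then have e1: "(m + int j) mod 2 = (m + k + int i) mod 2"
      and e2: "(m + int j) div 2 + (k + int i) div 2 = (m + k + int i) div 2" by presburger+
    show ?thesis using H j Cons.IH[of "(m + int j) div 2" "(k + int i) div 2"]
      by (simp add: j_def[symmetric] e1 e2)
  qed (use Cons in simp)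
qed simp

lemma carry_bound: "\<bar>(m + int i) div 2\<bar> \<le> max 1 (\<bar>m\<bar> - 1)" if "i \<in> {0,1}"
  using that by auto

lemma pa_append: "\<exists>c. pa m (p @ q) = pa m p @ pa c q \<and> \<bar>c\<bar> \<le> max 1 (\<bar>m\<bar> - int (length p))"
proof (induction p arbitrary: m)
  case Nil then show ?case by auto
next
  case (Cons e p)
  then show ?case
  proof (cases e rule: pa_cases)
    case (H i h)
    obtain c where c: "pa ((m + int i) div 2) (p @ q) = pa ((m + int i) div 2) p @ pa c q"
      "\<bar>c\<bar> \<le> max 1 (\<bar>(m + int i) div 2\<bar> - int (length p))" using Cons.IH by blast
    have "\<bar>c\<bar> \<le> max 1 (\<bar>m\<bar> - int (length (e#p)))" using c(2) carry_bound[OF H(1), of m] by (simp add: max_def split: if_splits)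
    then show ?thesis using H c by auto
  next
    case N
    obtain c where c: "pa 0 (p @ q) = pa 0 p @ pa c q" "\<bar>c\<bar> \<le> max 1 (0 - int (length p))"
      using Cons.IH[of 0] by auto
    then show ?thesis using N by (intro exI[of _ c]) auto
  qed
qed


definition Good :: "(int \<Rightarrow> 'e) \<Rightarrow> (int \<Rightarrow> 'e) \<Rightarrow> int \<Rightarrow> int \<Rightarrow> bool" where
  "Good mu nu c k \<longleftrightarrow> pa c (map mu [k..-1]) = map nu [k..-1]"

lemma Good_top: "Good mu nu c 0"
  by (simp add: Good_def)

lemma GoodH:
  assumes "k < 0" "i \<in> {0,1}" "h \<in> H1" "mu k = X i h"
  shows "Good mu nu c k \<longleftrightarrow> nu k = X (nat ((c + int i) mod 2)) h \<and> Good mu nu ((c + int i) div 2) (k+1)"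
  using assms upto_rec1[of k "-1"] by (auto simp: Good_def)

lemma GoodN:
  assumes "k < 0" "mu k \<notin> HX"
  shows "Good mu nu c k \<longleftrightarrow> nu k = mu k \<and> Good mu nu 0 (k+1)"
  using assms upto_rec1[of k "-1"] by (auto simp: Good_def)

lemma Good0: "Good mu nu 0 k \<longleftrightarrow> (\<forall>j. k \<le> j \<and> j < 0 \<longrightarrow> mu j = nu j)"
  unfolding Good_def pa_0 map_eq_conv by auto

lemma dir1_below:
  assumes "\<forall>k\<le>n. y k \<in> H1 \<and> mu k = X i (y k) \<and> nu k = X (1-i) (y k)"
    and "i \<in> {0,1}" "n < 0"
    and "Good mu nu (if i = 1 then 1 else -1) (n+1)"
  shows "Good mu nu (if i = 1 then 1 else -1) (n + 1 - int d)"
proof (induction d)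
  case 0 then show ?case using assms(4) by simp
next
  case (Suc d)
  define k where "k = n - int d"
  have k: "k \<le> n" "k < 0" "n + 1 - int (Suc d) = k" "n + 1 - int d = k + 1" using assms(3) unfolding k_def by auto
  have "X (nat (((if i = 1 then 1 else -1) + int i) mod 2)) (y k) = X (1-i) (y k)"
    "((if i = 1 then 1 else -1) + int i) div 2 = (if i = 1 then 1 else -1)"
    using assms(2) by auto
  then show ?case using Suc assms(1) k GoodH[OF k(2) assms(2), of "y k" mu nu] by auto
qed

lemma dir1_below':
  assumes "\<forall>k\<le>n. y k \<in> H1 \<and> mu k = X i (y k) \<and> nu k = X (1-i) (y k)"
    and "i \<in> {0,1}" "n < 0"
    and "Good mu nu (if i = 1 then 1 else -1) (n+1)" "n' \<le> n + 1"
  shows "Good mu nu (if i = 1 then 1 else -1) n'"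
  using dir1_below[OF assms(1-4), of "nat (n + 1 - n')"] assms(5) by simp

lemma dir1:
  assumes "n < 0" "i \<in> {0,1}"
    and y: "\<forall>k\<le>n. y k \<in> H1 \<and> mu k = X i (y k) \<and> nu k = X (1-i) (y k)"
    and cases: "n = -1 \<or>
             (n < -1 \<and> (\<forall>j. n + 1 < j \<and> j < 0 \<longrightarrow> mu j = nu j) \<and>
                (\<exists>y'\<in>H1. mu (n+1) = X (1 - i) y' \<and> nu (n+1) = X i y')) \<or>
             (n < -1 \<and> (\<forall>j. n + 1 \<le> j \<and> j < 0 \<longrightarrow> mu j = nu j) \<and>
                mu (n+1) \<notin> HX)"
  shows "\<exists>m. (\<forall>n. m n \<in> {-1,0,1}) \<and> (\<forall>n'<0. Good mu nu (m n') n')"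
proof -
  define c :: int where "c = (if i = 1 then 1 else -1)"
  have G: "Good mu nu c (n+1)"
    using cases
  proof (elim disjE conjE)
    assume "n = -1" then show ?thesis by (simp add: Good_top)
  next
    assume a: "n < -1" "\<forall>j. n + 1 < j \<and> j < 0 \<longrightarrow> mu j = nu j"
      "\<exists>y'\<in>H1. mu (n+1) = X (1 - i) y' \<and> nu (n+1) = X i y'"
    then obtain y' where y': "y' \<in> H1" "mu (n+1) = X (1 - i) y'" "nu (n+1) = X i y'" by blast
    have "Good mu nu 0 (n+1+1)" using a(2) by (auto simp: Good0)
    moreover have e: "nat ((c + int (1-i)) mod 2) = i" "(c + int (1-i)) div 2 = 0"
      using assms(2) by (auto simp: c_def)
    moreover have "1 - i \<in> {0,1}" by auto
    then have "Good mu nu c (n+1) \<longleftrightarrow> nu (n+1) = X (nat ((c + int (1-i)) mod 2)) y' \<and> Good mu nu ((c + int (1-i)) div 2) (n+1+1)"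
      using a(1) y' by (intro GoodH) auto
    ultimately show ?thesis using y' by (simp only: e)
  next
    assume a: "n < -1" "\<forall>j. n + 1 \<le> j \<and> j < 0 \<longrightarrow> mu j = nu j" "mu (n+1) \<notin> HX"
    have "Good mu nu 0 (n+1+1)" using a(2) by (auto simp: Good0)
    then show ?thesis using GoodN[of "n+1" mu nu c] a by auto
  qed
  define m where "m = (\<lambda>n'. if n' \<le> n + 1 then c else 0)"
  show ?thesis
  proof (intro exI[of _ m] conjI allI impI)
    fix n' show "m n' \<in> {-1,0,1}" by (auto simp: m_def c_def)
  next
    fix n' :: int assume "n' < 0"
    show "Good mu nu (m n') n'"
    proof (cases "n' \<le> n + 1")
      case True
      then show ?thesis using dir1_below'[OF y assms(2,1) G[unfolded c_def] True] by (simp add: m_def c_def)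
    next
      case False
      then have "n \<noteq> -1" using \<open>n' < 0\<close> by auto
      then have "\<forall>j. n' \<le> j \<and> j < 0 \<longrightarrow> mu j = nu j" using cases False by auto
      then show ?thesis using False by (simp add: m_def Good0)
    qed
  qed
qed


lemma R:
  assumes B: "\<forall>n<0. \<exists>c. \<bar>c\<bar> \<le> B \<and> Good mu nu c n" and "B \<ge> 0" "k < 0"
  shows "\<exists>c. \<bar>c\<bar> \<le> 1 \<and> Good mu nu c k"
proof -
  obtain m where m: "\<bar>m\<bar> \<le> B" "Good mu nu m (k - B)" using B[rule_format, of "k - B"] assms(2,3) by auto
  have sp: "[k-B..-1] = [k-B..k-1] @ [k..-1]" using assms by (intro upto_split1) auto
  obtain c where c: "pa m (map mu [k-B..k-1] @ map mu [k..-1]) = pa m (map mu [k-B..k-1]) @ pa c (map mu [k..-1])"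
    "\<bar>c\<bar> \<le> max 1 (\<bar>m\<bar> - int (length (map mu [k-B..k-1])))" using pa_append by blast
  have "\<bar>c\<bar> \<le> 1" using c(2) m(1) assms(2) by simp
  moreover have "pa m (map mu [k-B..k-1]) @ pa c (map mu [k..-1]) = map nu [k-B..k-1] @ map nu [k..-1]"
    using m(2) c(1) sp by (simp add: Good_def)
  then have "pa c (map mu [k..-1]) = map nu [k..-1]" by (simp add: append_eq_append_conv)
  ultimately show ?thesis by (auto simp: Good_def)
qed

lemma W0:
  assumes "Good mu nu 0 j" "j \<le> t" "t < 0" "mu t \<noteq> nu t"
  shows False
  using assms by (auto simp: Good0)

lemma W:
  assumes "Good mu nu c j" "c \<in> {-1,1}" "j < t" "t < 0" "mu t \<noteq> nu t"
  shows "\<exists>h\<in>H1. mu j = X (if c = 1 then 1 else 0) h \<and> nu j = X (1 - (if c = 1 then 1 else 0)) h \<and> Good mu nu c (j+1)"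
proof (cases "mu j" rule: pa_cases)
  case N
  then have "Good mu nu 0 (j+1)" using GoodN[of j mu nu c] assms by auto
  then have False using W0[of mu nu "j+1" t] assms by auto
  then show ?thesis by simp
next
  case (H i h)
  have g: "nu j = X (nat ((c + int i) mod 2)) h" "Good mu nu ((c + int i) div 2) (j+1)"
    using GoodH[of j i h mu nu c] H assms by auto
  have "(c + int i) div 2 \<noteq> 0" using g(2) W0 assms by force
  then have "(c = 1 \<and> i = 1) \<or> (c = -1 \<and> i = 0)" using assms(2) H(1) by auto
  then show ?thesis using g H by auto
qed

lemma W_iter:
  assumes "Good mu nu c k" "c \<in> {-1,1}" "k + int d \<le> t" "t < 0" "mu t \<noteq> nu t"
  shows "Good mu nu c (k + int d)"
  using assms(3)
proof (induction d)
  case (Suc d)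
  then have "Good mu nu c (k + int d)" by simp
  then have "Good mu nu c (k + int d + 1)" using W[of mu nu c "k + int d" t] Suc.prems assms by auto
  moreover have "k + int (Suc d) = k + int d + 1" by simp
  ultimately show ?case by metis
qed (use assms in simp)

lemma W_iter':
  assumes "Good mu nu c k" "c \<in> {-1,1}" "k \<le> j" "j \<le> t" "t < 0" "mu t \<noteq> nu t"
  shows "Good mu nu c j"
  using W_iter[OF assms(1,2), of "nat (j - k)" t] assms by simp

lemma dir2:
  assumes eq: "\<forall>k\<ge>0. mu k = nu k" and ne: "mu \<noteq> nu"
    and R: "\<forall>k<0. \<exists>c. \<bar>c\<bar> \<le> 1 \<and> Good mu nu c k"
  shows "\<exists>n::int. \<exists>i::nat. \<exists>y::int \<Rightarrow> 'f. n < 0 \<and> i \<in> {0,1} \<and>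
            (\<forall>k\<le>n. y k \<in> H1 \<and> mu k = xi_sel i x0e x1e (y k) \<and> nu k = xi_sel (1 - i) x0e x1e (y k)) \<and>
            (n = -1 \<or>
             (n < -1 \<and> (\<forall>j. n + 1 < j \<and> j < 0 \<longrightarrow> mu j = nu j) \<and>
                (\<exists>y'\<in>H1. mu (n+1) = xi_sel (1 - i) x0e x1e y' \<and> nu (n+1) = xi_sel i x0e x1e y')) \<or>
             (n < -1 \<and> (\<forall>j. n + 1 \<le> j \<and> j < 0 \<longrightarrow> mu j = nu j) \<and>
                mu (n+1) \<notin> H1xi H1 x0e x1e))"
proof -
  obtain k0 where k0: "mu k0 \<noteq> nu k0" using ne by auto
  then have k0n: "k0 < 0" using eq by (cases "k0 < 0") auto
  have ex: "\<exists>j::nat. mu (- int j - 1) \<noteq> nu (- int j - 1)"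
    using k0 k0n by (intro exI[of _ "nat (- k0 - 1)"]) auto
  define j0 where "j0 = (LEAST j::nat. mu (- int j - 1) \<noteq> nu (- int j - 1))"
  define t where "t = - int j0 - 1"
  have tne: "mu t \<noteq> nu t" unfolding t_def j0_def using LeastI_ex[OF ex] .
  have tn: "t < 0" unfolding t_def by simp
  have above: "\<forall>j. t < j \<and> j < 0 \<longrightarrow> mu j = nu j"
  proof (intro allI impI)
    fix j :: int assume a: "t < j \<and> j < 0"
    have "nat (- j - 1) < j0" using a unfolding t_def by auto
    from not_less_Least[OF this[unfolded j0_def]] show "mu j = nu j" using a by simp
  qed
  have Rn: "\<exists>c. c \<in> {-1,1} \<and> Good mu nu c k" if kt: "k \<le> t" for k
  proof -
    obtain c where c: "\<bar>c\<bar> \<le> 1" "Good mu nu c k" using R[rule_format, of k] kt tn by auto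
    have "c \<noteq> 0" using W0[of mu nu k t] c kt tn tne by auto
    then show ?thesis using c by (intro exI[of _ c]) auto
  qed
  obtain cs where cs: "cs \<in> {-1,1}" "Good mu nu cs (t - 1)" using Rn[of "t-1"] by auto
  define i :: nat where "i = (if cs = 1 then 1 else 0)"
  have i01: "i \<in> {0,1}" by (simp add: i_def)
  obtain hs where hs: "hs \<in> H1" "mu (t-1) = X i hs" using W[OF cs(2) cs(1), of t] tn tne unfolding i_def by auto
  have below: "\<exists>h\<in>H1. mu k = X i h \<and> nu k = X (1 - i) h" "Good mu nu cs k" if kt: "k < t" for k
  proof -
    obtain c where c: "c \<in> {-1,1}" "Good mu nu c k" using Rn[of k] kt by auto
    have "Good mu nu c (t-1)" using W_iter'[OF c(2) c(1), of "t-1" t] kt tn tne by auto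
    then obtain h' where "h' \<in> H1" "mu (t-1) = X (if c = 1 then 1 else 0) h'" using W[OF _ c(1), of mu nu "t-1" t] tn tne by auto
    then have "(if c = 1 then 1 else 0) = i" using dec[of i hs "(if c = 1 then 1 else 0)" h'] hs i01 by auto
    then have "c = cs" using c(1) cs(1) unfolding i_def by (auto split: if_splits)
    then show "Good mu nu cs k" using c by simp
    show "\<exists>h\<in>H1. mu k = X i h \<and> nu k = X (1 - i) h"
      using W[OF c(2) c(1), of t] kt tn tne \<open>c = cs\<close> unfolding i_def by auto
  qed
  have Gt: "Good mu nu cs t" using below(2)[of "t-1"] W[OF _ cs(1), of mu nu "t-1" t] tn tne by auto
  show ?thesis
  proof (cases "mu t" rule: pa_cases)
    case N
    then show ?thesis using GoodN[of t mu nu cs] Gt tn tne by auto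
  next
    case (H d h)
    have g: "nu t = X (nat ((cs + int d) mod 2)) h" "Good mu nu ((cs + int d) div 2) (t+1)"
      using GoodH[of t d h mu nu cs] H Gt tn by auto
    define y where "y = (\<lambda>k. SOME h. h \<in> H1 \<and> mu k = X i h \<and> nu k = X (1 - i) h)"
    have yb: "y k \<in> H1 \<and> mu k = X i (y k) \<and> nu k = X (1 - i) (y k)" if "k < t" for k
    proof -
      have "\<exists>h. h \<in> H1 \<and> mu k = X i h \<and> nu k = X (1 - i) h" using below(1)[OF that] by blast
      from someI_ex[OF this] show ?thesis unfolding y_def by blast
    qed
    show ?thesis
    proof (cases "(cs + int d) div 2 = 0")
      case True
      then have dd: "d = 1 - i" "nat ((cs + int d) mod 2) = i" using cs(1) H(1) unfolding i_def by auto
      show ?thesis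
        apply (rule exI[of _ "t - 1"], rule exI[of _ i], rule exI[of _ y])
        using tn i01 yb above H dd g(1) by auto
    next
      case False
      then have dd: "d = i" "nat ((cs + int d) mod 2) = 1 - i" "(cs + int d) div 2 = cs"
        using cs(1) H(1) unfolding i_def by auto
      define y2 where "y2 = y(t := h)"
      have yb2: "\<forall>k\<le>t. y2 k \<in> H1 \<and> mu k = X i (y2 k) \<and> nu k = X (1 - i) (y2 k)"
        using yb H g(1) dd unfolding y2_def by auto
      have "t = -1 \<or> (t < -1 \<and> (\<forall>j. t + 1 \<le> j \<and> j < 0 \<longrightarrow> mu j = nu j) \<and> mu (t+1) \<notin> HX)"
      proof (cases "t = -1")
        case False
        then have tl: "t < -1" using tn by simp
        have eq1: "mu (t+1) = nu (t+1)" using above tl by auto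
        have "mu (t+1) \<notin> HX"
        proof
          assume "mu (t+1) \<in> HX"
          then obtain d' h' where d': "d' \<in> {0,1}" "h' \<in> H1" "mu (t+1) = X d' h'" using HX_cases by blast
          have "nu (t+1) = X (nat ((cs + int d') mod 2)) h'"
            using GoodH[of "t+1" d' h' mu nu cs] d' g(2) dd(3) tl by auto
          moreover have "nat ((cs + int d') mod 2) \<noteq> d'" using cs(1) d'(1) by auto
          moreover have e01: "nat ((cs + int d') mod 2) \<in> {0,1}" by auto
          ultimately show False using dec[OF d'(1) d'(2) e01 d'(2)] eq1 d'(3) by auto
        qed
        then show ?thesis using tl above by auto
      qed simp
      then show ?thesis
        apply -
        apply (rule exI[of _ t], rule exI[of _ i], rule exI[of _ y2])
        using tn i01 yb2 by auto
    qed
  qed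
qed

end

lemma Eneg_fpath:
  assumes "mu \<in> Eneg E1 r s" "n < 0"
  shows "fpath E1 r s (map mu [n..-1]) \<and> map mu [n..-1] \<noteq> [] \<and> r (hd (map mu [n..-1])) = r (mu n)"
proof -
  have m: "\<forall>k<0. mu k \<in> E1" "\<forall>k< -1. s (mu k) = r (mu (k + 1))" using assms(1) by (auto simp: Eneg_def)
  have "set (map mu [n..-1]) \<subseteq> E1" using m(1) by auto
  moreover have "\<forall>i. Suc i < length (map mu [n..-1]) \<longrightarrow> s (map mu [n..-1] ! i) = r (map mu [n..-1] ! Suc i)"
  proof (intro allI impI)
    fix i assume a: "Suc i < length (map mu [n..-1])"
    then have i: "n + int i < -1" by simp
    have "map mu [n..-1] ! i = mu (n + int i)" using a i by auto
    moreover have "map mu [n..-1] ! Suc i = mu (n + int (Suc i))" using a i by (intro trans[OF nth_map]) auto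
    moreover have "n + int (Suc i) = n + int i + 1" by simp
    ultimately have "map mu [n..-1] ! i = mu (n + int i)" "map mu [n..-1] ! Suc i = mu (n + int i + 1)" by metis+
    then show "s (map mu [n..-1] ! i) = r (map mu [n..-1] ! Suc i)" using m(2) i by simp
  qed
  moreover have "[n..-1] = n # [n+1..-1]" using assms(2) by (intro upto_rec1) simp
  ultimately show ?thesis using assms by (simp add: fpath_def)
qed

lemma Gclass:
  assumes ep: "EP H1 x0e x1e" and v: "v \<in> E0"
  shows "Gxi_dom (Gxi_class E0 E1 r s H1 x0e x1e (m, v)) = v"
    and "\<And>p. fpath E1 r s p \<Longrightarrow> p \<noteq> [] \<Longrightarrow> r (hd p) = v \<Longrightarrow>
           Gxi_act H1 x0e x1e s (Gxi_class E0 E1 r s H1 x0e x1e (m, v)) p = EP.pa H1 x0e x1e s m p"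
proof -
  interpret EP H1 x0e x1e by (rule ep)
  have "(0, v) \<in> triv_elems E0 E1 r s H1 x0e x1e" using v by (auto simp: triv_elems_def path_act_pa)
  then have ne: "(m, v) \<in> Gxi_class E0 E1 r s H1 x0e x1e (m, v)" unfolding Gxi_class_def by force
  define g where "g = (SOME g. g \<in> Gxi_class E0 E1 r s H1 x0e x1e (m, v))"
  have "g \<in> Gxi_class E0 E1 r s H1 x0e x1e (m, v)" unfolding g_def using ne by (rule someI)
  then obtain k where k: "g = (m + k, v)" "(k, v) \<in> triv_elems E0 E1 r s H1 x0e x1e"
    unfolding Gxi_class_def by auto
  show "Gxi_dom (Gxi_class E0 E1 r s H1 x0e x1e (m, v)) = v"
    unfolding Gxi_dom_def g_def[symmetric] k by simp
  fix p assume p: "fpath E1 r s p" "p \<noteq> []" "r (hd p) = v"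
  have "pa k p = p" using k(2) p by (auto simp: triv_elems_def path_act_pa)
  then show "Gxi_act H1 x0e x1e s (Gxi_class E0 E1 r s H1 x0e x1e (m, v)) p = pa m p"
    unfolding Gxi_act_def g_def[symmetric] k path_act_pa by (simp add: pa_add)
qed


theorem theorem4p1:
  fixes E0 :: "'v set" and E1 :: "'e set" and r s :: "'e \<Rightarrow> 'v"
    and H0 :: "'w set" and H1 :: "'f set" and rH sH :: "'f \<Rightarrow> 'w"
    and x0v x1v :: "'w \<Rightarrow> 'v" and x0e x1e :: "'f \<Rightarrow> 'e"
  assumes "finite_dgraph E0 E1 r s"
    and "finite_dgraph H0 H1 rH sH"
    and "embedding_pair H0 H1 rH sH E0 E1 r s x0v x0e x1v x1e"
  shows "xi_rel E1 r s H1 x0e x1e = ae_rel E0 E1 r s H1 x0e x1e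
       \<and> Eneg E1 r s // xi_rel E1 r s H1 x0e x1e = Eneg E1 r s // ae_rel E0 E1 r s H1 x0e x1e"
proof -
  have ep: "EP H1 x0e x1e"
    using assms(3) unfolding embedding_pair_def inj_graph_hom_def by (auto intro: EP.intro)
  interpret EP H1 x0e x1e s by (rule ep)
  have finE0: "finite E0" and rE0: "\<And>e. e \<in> E1 \<Longrightarrow> r e \<in> E0"
    using assms(1) by (auto simp: finite_dgraph_def dgraph_def)
  have sub1: "xi_rel E1 r s H1 x0e x1e \<subseteq> ae_rel E0 E1 r s H1 x0e x1e"
  proof
    fix x assume "x \<in> xi_rel E1 r s H1 x0e x1e"
    then obtain mu nu where x: "x = (mu, nu)" and mn: "mu \<in> Eneg E1 r s" "nu \<in> Eneg E1 r s"
      and rest: "mu = nu \<or>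
         (\<exists>n::int. \<exists>i::nat. \<exists>y::int \<Rightarrow> 'f. n < 0 \<and> i \<in> {0,1} \<and>
            (\<forall>k\<le>n. y k \<in> H1 \<and> mu k = xi_sel i x0e x1e (y k) \<and> nu k = xi_sel (1 - i) x0e x1e (y k)) \<and>
            (n = -1 \<or>
             (n < -1 \<and> (\<forall>j. n + 1 < j \<and> j < 0 \<longrightarrow> mu j = nu j) \<and>
                (\<exists>y'\<in>H1. mu (n+1) = xi_sel (1 - i) x0e x1e y' \<and> nu (n+1) = xi_sel i x0e x1e y')) \<or>
             (n < -1 \<and> (\<forall>j. n + 1 \<le> j \<and> j < 0 \<longrightarrow> mu j = nu j) \<and>
                mu (n+1) \<notin> H1xi H1 x0e x1e)))"
      unfolding xi_rel_def by blast
    have "\<exists>m. (\<forall>n. m n \<in> {-1,0,1}) \<and> (\<forall>n'<0. Good mu nu (m n') n')"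
    proof (cases "mu = nu")
      case True then show ?thesis by (intro exI[of _ "\<lambda>_. 0"]) (auto simp: Good0)
    next
      case False
      then obtain n i y where "n < 0" "i \<in> {0,1}" "\<forall>k\<le>n. y k \<in> H1 \<and> mu k = X i (y k) \<and> nu k = X (1 - i) (y k)"
        "n = -1 \<or>
             (n < -1 \<and> (\<forall>j. n + 1 < j \<and> j < 0 \<longrightarrow> mu j = nu j) \<and>
                (\<exists>y'\<in>H1. mu (n+1) = X (1 - i) y' \<and> nu (n+1) = X i y')) \<or>
             (n < -1 \<and> (\<forall>j. n + 1 \<le> j \<and> j < 0 \<longrightarrow> mu j = nu j) \<and>
                mu (n+1) \<notin> HX)" using rest by blast
      then show ?thesis by (rule dir1)
    qed
    then obtain m where m: "\<forall>n. m n \<in> {-1,0,1}" "\<forall>n'<0. Good mu nu (m n') n'" by blast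
    define F where "F = (\<lambda>(m,v). Gxi_class E0 E1 r s H1 x0e x1e (m,v)) ` ({-1,0,1} \<times> E0)"
    define g where "g = (\<lambda>n. Gxi_class E0 E1 r s H1 x0e x1e (m n, r (mu n)))"
    have "F \<subseteq> Gxi E0 E1 r s H1 x0e x1e" unfolding F_def Gxi_def by auto
    moreover have "finite F" unfolding F_def using finE0 by auto
    moreover have "\<forall>n<0. g n \<in> F \<and> Gxi_dom (g n) = r (mu n) \<and>
              Gxi_act H1 x0e x1e s (g n) (map mu [n..-1]) = map nu [n..-1]"
    proof (intro allI impI conjI)
      fix n :: int assume n: "n < 0"
      have v: "r (mu n) \<in> E0" using mn(1) n rE0 by (auto simp: Eneg_def)
      show "g n \<in> F" unfolding F_def g_def using m(1) v by force
      show "Gxi_dom (g n) = r (mu n)" unfolding g_def by (rule Gclass(1)[OF ep v])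
      have fp: "fpath E1 r s (map mu [n..-1])" "map mu [n..-1] \<noteq> []" "r (hd (map mu [n..-1])) = r (mu n)"
        using Eneg_fpath[OF mn(1) n] by auto
      show "Gxi_act H1 x0e x1e s (g n) (map mu [n..-1]) = map nu [n..-1]"
        unfolding g_def Gclass(2)[OF ep v fp] using m(2) n by (simp add: Good_def)
    qed
    ultimately show "x \<in> ae_rel E0 E1 r s H1 x0e x1e" unfolding x ae_rel_def using mn by blast
  qed
  have sub2: "ae_rel E0 E1 r s H1 x0e x1e \<subseteq> xi_rel E1 r s H1 x0e x1e"
  proof
    fix x assume "x \<in> ae_rel E0 E1 r s H1 x0e x1e"
    then obtain mu nu F g where x: "x = (mu, nu)" and mn: "mu \<in> Eneg E1 r s" "nu \<in> Eneg E1 r s"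
      and F: "finite F" and g: "\<forall>n<0. g n \<in> F \<and> Gxi_dom (g n) = r (mu n) \<and>
              Gxi_act H1 x0e x1e s (g n) (map mu [n..-1]) = map nu [n..-1]"
      unfolding ae_rel_def by blast
    define f :: "(int \<times> 'v) set \<Rightarrow> int" where "f = (\<lambda>c. \<bar>fst (SOME x. x \<in> c)\<bar>)"
    define B where "B = Max (insert 0 (f ` F))"
    have B0: "B \<ge> 0" unfolding B_def using F by simp
    have "\<forall>n<0. \<exists>c. \<bar>c\<bar> \<le> B \<and> Good mu nu c n"
    proof (intro allI impI)
      fix n :: int assume n: "n < 0"
      let ?c = "fst (SOME x. x \<in> g n)"
      have "\<bar>?c\<bar> \<le> B" unfolding B_def f_def using F g n by (intro Max_ge) auto
      moreover have "Good mu nu ?c n" using g n unfolding Good_def Gxi_act_def path_act_pa by auto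
      ultimately show "\<exists>c. \<bar>c\<bar> \<le> B \<and> Good mu nu c n" by blast
    qed
    then have Rr: "\<forall>k<0. \<exists>c. \<bar>c\<bar> \<le> 1 \<and> Good mu nu c k" using R B0 by blast
    have eq: "\<forall>k\<ge>0. mu k = nu k" using mn by (auto simp: Eneg_def)
    show "x \<in> xi_rel E1 r s H1 x0e x1e"
    proof (cases "mu = nu")
      case True then show ?thesis unfolding x xi_rel_def using mn by auto
    next
      case False
      from dir2[OF eq False Rr] show ?thesis unfolding x xi_rel_def using mn by blast
    qed
  qed
  from sub1 sub2 show ?thesis by auto
qed

end
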